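(* Let $k=p^\ell$ with $p$ a prime and $\ell>0$. For every $L\in\mathcal L_k$, the subgraph of $\mathcal F_k$ induced on $\phi_k^{-1}(L)$ is connected.
   Context: The vertex set $V$ consists of all reduced fractions $p/q$ with $p,q\in\mathbb Z$, $\gcd(p,q)=1$, together with $1/0$; here $p/q$ and $(-p)/(-q)$ denote the same vertex. For vertices define $d(p/q,a/b)=|pb-qa|$. The graph $\mathcal F_k$ has vertex set $V$, with an edge between $p/q$ and $a/b$ exactly when $d(p/q,a/b)=k$. An element $(a,b)\in(\mathbb Z/k\mathbb Z)^2$ is admissible if for $\lambda\in\mathbb Z/k\mathbb Z$, $(\lambda a,\lambda b)=0$ implies $\lambda=0$; $\mathcal L_k$ is the set of admissible elements modulo $v\sim\lambda v$ for units $\lambda\in(\mathbb Z/k\mathbb Z)^*$; $\phi_k:V\to\mathcal L_k$ sends $p/q$ to the class of $(p\bmod k,q\bmod k)$. *)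

theory Defs
  imports "HOL-Computational_Algebra.Primes"
begin

text \<open>Vertices: reduced fractions p/q (gcd(p,q)=1) including 1/0, where p/q and (-p)/(-q)
  are identified. We use the canonical representative with q > 0, or (p,q) = (1,0).\<close>
definition Fverts :: "(int \<times> int) set" where
  "Fverts = {(p, q). coprime p q \<and> (q > 0 \<or> (q = 0 \<and> p = 1))}"

definition fdist :: "int \<times> int \<Rightarrow> int \<times> int \<Rightarrow> int" where
  "fdist u v = \<bar>fst u * snd v - snd u * fst v\<bar>"

definition Fk_edge :: "int \<Rightarrow> int \<times> int \<Rightarrow> int \<times> int \<Rightarrow> bool" where
  "Fk_edge k u v \<longleftrightarrow> u \<in> Fverts \<and> v \<in> Fverts \<and> fdist u v = k"

text \<open>Z/kZ represented by {0..<k}.\<close>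
definition admissible :: "int \<Rightarrow> int \<times> int \<Rightarrow> bool" where
  "admissible k v \<longleftrightarrow> fst v \<in> {0..<k} \<and> snd v \<in> {0..<k} \<and>
     (\<forall>c\<in>{0..<k}. (c * fst v) mod k = 0 \<and> (c * snd v) mod k = 0 \<longrightarrow> c = 0)"

definition unit_equiv :: "int \<Rightarrow> int \<times> int \<Rightarrow> int \<times> int \<Rightarrow> bool" where
  "unit_equiv k v w \<longleftrightarrow> (\<exists>c\<in>{0..<k}. coprime c k \<and>
     w = ((c * fst v) mod k, (c * snd v) mod k))"

definition Lk :: "int \<Rightarrow> (int \<times> int) set set" where
  "Lk k = {{w. admissible k w \<and> unit_equiv k v w} | v. admissible k v}"

definition phik :: "int \<Rightarrow> int \<times> int \<Rightarrow> (int \<times> int) set" where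
  "phik k u = {w. admissible k w \<and> unit_equiv k (fst u mod k, snd u mod k) w}"

definition induced_connected :: "int \<Rightarrow> (int \<times> int) set \<Rightarrow> bool" where
  "induced_connected k S \<longleftrightarrow> S \<noteq> {} \<and>
     (\<forall>u\<in>S. \<forall>v\<in>S. (\<lambda>x y. x \<in> S \<and> y \<in> S \<and> Fk_edge k x y)\<^sup>*\<^sup>* u v)"

end

theory Submission
  imports Defs
begin


definition det :: "int \<times> int \<Rightarrow> int \<times> int \<Rightarrow> int" where
  "det u v = fst u * snd v - snd u * fst v"

definition nrm :: "int \<times> int \<Rightarrow> int \<times> int" where
  "nrm v = (if snd v < 0 \<or> (snd v = 0 \<and> fst v < 0) then (- fst v, - snd v) else v)"

definition prim :: "int \<times> int \<Rightarrow> bool" where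
  "prim v \<longleftrightarrow> coprime (fst v) (snd v)"

lemma nrm_cases: "nrm v = v \<or> nrm v = (- fst v, - snd v)"
  by (simp add: nrm_def)

lemma det_nrm_left: "\<bar>det (nrm a) b\<bar> = \<bar>det a b\<bar>"
  using nrm_cases[of a] by (auto simp: det_def algebra_simps)

lemma det_nrm_right: "\<bar>det a (nrm b)\<bar> = \<bar>det a b\<bar>"
  using nrm_cases[of b] by (auto simp: det_def algebra_simps)

lemma det_nrm_right_dvd: "k dvd det a (nrm b) \<longleftrightarrow> k dvd det a b"
  using nrm_cases[of b] by (auto simp: det_def algebra_simps)

lemma nrm_Fverts: "prim v \<Longrightarrow> nrm v \<in> Fverts"
proof -
  assume "prim v"
  then have c: "coprime (fst v) (snd v)" by (simp add: prim_def)
  show ?thesis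
  proof (cases "snd v = 0")
    case True
    with c have "is_unit (fst v)" by simp
    then have "fst v = 1 \<or> fst v = -1" by auto
    with True show ?thesis by (auto simp: nrm_def Fverts_def)
  next
    case False
    with c show ?thesis by (auto simp: nrm_def Fverts_def)
  qed
qed

lemma Fverts_prim: "v \<in> Fverts \<Longrightarrow> prim v"
  by (auto simp: Fverts_def prim_def)

lemma Fverts_nrm: "v \<in> Fverts \<Longrightarrow> nrm v = v"
  by (auto simp: Fverts_def nrm_def)

lemma nrm_neg: "v \<in> Fverts \<Longrightarrow> nrm (- fst v, - snd v) = v"
  by (auto simp: Fverts_def nrm_def)

lemma nrm_neg2: "prim v \<Longrightarrow> nrm (- fst v, - snd v) = nrm v"
  by (cases v) (auto simp: prim_def nrm_def)

lemma fdist_det: "fdist u v = \<bar>det u v\<bar>"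
  by (simp add: fdist_def det_def)

lemma descent:
  assumes pr: "prime P" and k: "k = P ^ l" and l: "l > 0" and u0: "u0 \<in> Fverts"
  shows "prim v \<Longrightarrow> \<bar>det u0 v\<bar> = int m * k \<Longrightarrow>
    (\<lambda>x y. x \<in> {w\<in>Fverts. k dvd det u0 w} \<and> y \<in> {w\<in>Fverts. k dvd det u0 w}
        \<and> Fk_edge k x y)\<^sup>*\<^sup>* u0 (nrm v)"
proof (induction m arbitrary: v rule: less_induct)
  case (less m v)
  define S where "S = {w\<in>Fverts. k dvd det u0 w}"
  define R where "R = (\<lambda>x y. x \<in> S \<and> y \<in> S \<and> Fk_edge k x y)"
  obtain x y where xy: "u0 = (x, y)" by force
  have cxy: "coprime x y" using u0 xy by (simp add: Fverts_def)
  obtain a b where ab: "a * x + b * y = 1" using bezout_int[of x y] cxy by auto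
  define r where "r = - b"
  define s where "s = a"
  have rs: "x * s - y * r = 1" using ab by (simp add: r_def s_def algebra_simps)
  have P2: "P \<ge> 2" using pr by (simp add: prime_ge_2_int)
  have "P \<le> P ^ l" using P2 l by (simp add: self_le_power)
  then have kpos: "k \<ge> 2" using P2 k by linarith
  have Pk: "P dvd k" using k l by (simp add: dvd_power)
  have u0S: "u0 \<in> S" using u0 by (simp add: S_def det_def)
  have vS: "nrm v \<in> S"
    using less.prems nrm_Fverts[OF less.prems(1)]
    by (auto simp: S_def det_nrm_right_dvd) (metis dvd_abs_iff dvd_triv_right)
  have gen1: "fst w = det w (r, s) * x + det u0 w * r" for w
  proof -
    have "fst w = fst w * (x * s - y * r)" using rs by simp
    then show ?thesis by (simp add: det_def xy algebra_simps)
  qed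
  have gen2: "snd w = det w (r, s) * y + det u0 w * s" for w
  proof -
    have "snd w = snd w * (x * s - y * r)" using rs by simp
    then show ?thesis by (simp add: det_def xy algebra_simps)
  qed
  show ?case
  proof (cases "m = 0")
    case True
    then have d0: "det u0 v = 0" using less.prems by simp
    define al where "al = det v (r, s)"
    have v: "v = (al * x, al * y)" using gen1[of v] gen2[of v] d0 unfolding al_def
      by (simp add: prod_eq_iff)
    have "coprime (al * x) (al * y)" using less.prems(1) v by (simp add: prim_def)
    then have "is_unit al" by simp
    then have "al = 1 \<or> al = -1" by auto
    then have "nrm v = u0"
      using v xy u0 Fverts_nrm[OF u0] nrm_neg[OF u0] by auto
    then show ?thesis by simp
  next
    case m0: False
    show ?thesis
    proof (cases "m = 1")
      case True
      have "R u0 (nrm v)"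
        using u0S vS less.prems True
        by (simp add: R_def Fk_edge_def S_def fdist_det det_nrm_right)
      then show ?thesis unfolding R_def S_def by auto
    next
      case m1: False
      have m2: "int m \<ge> 2" using m0 m1 by simp
      obtain v' where v': "prim v'" "nrm v' = nrm v" "det u0 v' = int m * k"
      proof (cases "det u0 v \<ge> 0")
        case True
        then show ?thesis using that[of v] less.prems by simp
      next
        case False
        show ?thesis
          apply (rule that[of "(- fst v, - snd v)"])
          using less.prems False nrm_neg2[OF less.prems(1)]
          by (auto simp: prim_def det_def algebra_simps)
      qed
      define al where "al = det v' (r, s)"
      have v'1: "fst v' = al * x + int m * k * r" using gen1[of v'] v' al_def by simp
      have v'2: "snd v' = al * y + int m * k * s" using gen2[of v'] v' al_def by simp
      have cal: "coprime al (int m * k)"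
      proof (rule coprimeI)
        fix d assume "d dvd al" "d dvd int m * k"
        then have "d dvd fst v'" "d dvd snd v'" using v'1 v'2 by auto
        then show "is_unit d" using v'(1) unfolding prim_def by (metis coprime_common_divisor)
      qed
      then have calm: "coprime al (int m)" and calk: "coprime al k" by simp_all
      have nPal: "\<not> P dvd al"
      proof
        assume "P dvd al"
        then have "is_unit P" using calk Pk by (metis coprime_common_divisor)
        then show False using pr by (simp add: not_prime_unit)
      qed
      obtain e f where ef: "e * al + f * int m = 1"
        using bezout_int[of al "int m"] calm by auto
      define n where "n = e mod int m"
      have "int m dvd al * n - 1"
      proof -
        have ed: "e = int m * (e div int m) + n" by (simp add: n_def)
        have "al * n - 1 = int m * (- f - al * (e div int m))"
          using ef ed by algebra
        then show ?thesis by simp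
      qed
      then obtain c where c: "al * n - 1 = int m * c" by blast
      have n0: "0 \<le> n" "n < int m" using m2 by (auto simp: n_def)
      have n1: "n \<noteq> 0"
      proof
        assume "n = 0"
        then have "int m * c = -1" using c by simp
        then have "int m dvd 1" by (metis dvd_minus_iff dvd_triv_left)
        then show False using m2 by auto
      qed
      obtain c' n' where cn: "al * n' - int m * c' = 1" "\<not> P dvd c'" "0 < \<bar>n'\<bar>" "\<bar>n'\<bar> < int m"
      proof (cases "P dvd c")
        case False
        then show ?thesis using that[of n c] c n0 n1 by simp
      next
        case True
        then have "\<not> P dvd (c - al)" using nPal dvd_diff[of P c "c - al"] by auto
        then show ?thesis using that[of "n - int m" "c - al"] c n0 n1
          by (simp add: algebra_simps)
      qed
      define z where "z = (c' * x + n' * k * r, c' * y + n' * k * s)"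
      have dz: "det u0 z = n' * k"
      proof -
        have "det u0 z = n' * k * (x * s - y * r)" by (simp add: z_def xy det_def algebra_simps)
        then show ?thesis using rs by simp
      qed
      have dzr: "det z (r, s) = c'"
      proof -
        have "det z (r, s) = c' * (x * s - y * r)" by (simp add: z_def xy det_def algebra_simps)
        then show ?thesis using rs by simp
      qed
      have dzv: "det z v' = - k"
      proof -
        have "det z v' = k * (c' * int m - n' * al) * (x * s - y * r)"
          by (simp add: z_def det_def v'1 v'2 algebra_simps)
        then show ?thesis using rs cn(1) by algebra
      qed
      have cc: "coprime c' (n' * k)"
      proof -
        have "coprime c' n'"
        proof (rule coprimeI)
          fix d assume "d dvd c'" "d dvd n'"
          then have "d dvd al * n' - int m * c'" by simp
          then show "is_unit d" using cn(1) by simp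
        qed
        moreover have "coprime c' P" using cn(2) pr
          by (simp add: prime_imp_coprime coprime_commute)
        then have "coprime c' k" using k by simp
        ultimately show ?thesis by simp
      qed
      have pz: "prim z"
        unfolding prim_def
      proof (rule coprimeI)
        fix d assume "d dvd fst z" "d dvd snd z"
        then have "d dvd det z (r, s)" "d dvd det u0 z" by (auto simp: det_def)
        then show "is_unit d" using dzr dz cc by (metis coprime_common_divisor)
      qed
      have lt: "nat \<bar>n'\<bar> < m" using cn by simp
      have "\<bar>det u0 z\<bar> = int (nat \<bar>n'\<bar>) * k" using dz kpos by (simp add: abs_mult)
      from less.IH[OF lt pz this]
      have IH: "R\<^sup>*\<^sup>* u0 (nrm z)" unfolding R_def S_def .
      have zS: "nrm z \<in> S" using nrm_Fverts[OF pz] dz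
        by (simp add: S_def det_nrm_right_dvd)
      have "\<bar>det (nrm z) (nrm v)\<bar> = k"
        using v'(2)[symmetric] dzv kpos by (simp add: det_nrm_left det_nrm_right)
      then have "R (nrm z) (nrm v)" using zS vS
        by (simp add: R_def Fk_edge_def S_def fdist_det)
      with IH have "R\<^sup>*\<^sup>* u0 (nrm v)" by (rule rtranclp.rtrancl_into_rtrancl)
      then show ?thesis unfolding R_def S_def .
    qed
  qed
qed



definition ue :: "int \<Rightarrow> int \<times> int \<Rightarrow> int \<times> int \<Rightarrow> bool" where
  "ue k v w \<longleftrightarrow> (\<exists>c. coprime c k \<and> k dvd fst w - c * fst v \<and> k dvd snd w - c * snd v)"

lemma ue_iff:
  assumes k: "k > 1" and w: "fst w \<in> {0..<k}" "snd w \<in> {0..<k}"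
  shows "unit_equiv k v w \<longleftrightarrow> ue k v w"
proof
  assume "unit_equiv k v w"
  then obtain c where c: "coprime c k" "w = ((c * fst v) mod k, (c * snd v) mod k)"
    by (auto simp: unit_equiv_def)
  have "k dvd fst w - c * fst v" "k dvd snd w - c * snd v"
    using c(2) by (auto simp: mod_eq_dvd_iff[symmetric])
  then show "ue k v w" using c(1) by (auto simp: ue_def)
next
  assume "ue k v w"
  then obtain c where c: "coprime c k" "k dvd fst w - c * fst v" "k dvd snd w - c * snd v"
    by (auto simp: ue_def)
  have c': "c mod k \<in> {0..<k}" "coprime (c mod k) k" using k c(1) by auto
  have "fst w = fst w mod k" using w by simp
  also have "\<dots> = (c * fst v) mod k" using c(2) by (simp add: mod_eq_dvd_iff)
  also have "\<dots> = (c mod k * fst v) mod k" by (simp add: mod_mult_left_eq)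
  finally have 1: "fst w = (c mod k * fst v) mod k" .
  have "snd w = snd w mod k" using w by simp
  also have "\<dots> = (c * snd v) mod k" using c(3) by (simp add: mod_eq_dvd_iff)
  also have "\<dots> = (c mod k * snd v) mod k" by (simp add: mod_mult_left_eq)
  finally have 2: "snd w = (c mod k * snd v) mod k" .
  show "unit_equiv k v w" unfolding unit_equiv_def
    using c' 1 2 by (intro bexI[of _ "c mod k"]) (auto simp: prod_eq_iff)
qed

lemma ue_refl: "ue k v v"
  unfolding ue_def by (rule exI[of _ 1]) simp

lemma ue_sym: assumes "ue k v w" shows "ue k w v"
proof -
  obtain c where c: "coprime c k" "k dvd fst w - c * fst v" "k dvd snd w - c * snd v"
    using assms by (auto simp: ue_def)
  obtain d e where de: "d * c + e * k = 1" using bezout_int[of c k] c(1) by auto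
  have cd: "coprime d k"
  proof (rule coprimeI)
    fix g assume "g dvd d" "g dvd k"
    then have "g dvd d * c + e * k" by simp
    then show "is_unit g" using de by simp
  qed
  obtain q1 where q1: "fst w - c * fst v = k * q1" using c(2) by blast
  obtain q2 where q2: "snd w - c * snd v = k * q2" using c(3) by blast
  have "fst v - d * fst w = k * (e * fst v - d * q1)" using q1 de by algebra
  moreover have "snd v - d * snd w = k * (e * snd v - d * q2)" using q2 de by algebra
  ultimately show ?thesis using cd unfolding ue_def
    by (intro exI[of _ d]) (metis dvd_triv_left)
qed

lemma ue_trans: assumes "ue k u v" "ue k v w" shows "ue k u w"
proof -
  obtain c where c: "coprime c k" "k dvd fst v - c * fst u" "k dvd snd v - c * snd u"
    using assms by (auto simp: ue_def)
  obtain d where d: "coprime d k" "k dvd fst w - d * fst v" "k dvd snd w - d * snd v"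
    using assms by (auto simp: ue_def)
  have e1: "fst w - (d * c) * fst u = (fst w - d * fst v) + d * (fst v - c * fst u)"
    by (simp add: algebra_simps)
  have e2: "snd w - (d * c) * snd u = (snd w - d * snd v) + d * (snd v - c * snd u)"
    by (simp add: algebra_simps)
  have "k dvd fst w - (d * c) * fst u" unfolding e1 using c d by simp
  moreover have "k dvd snd w - (d * c) * snd u" unfolding e2 using c d by simp
  moreover have "coprime (d * c) k" using c d by simp
  ultimately show ?thesis unfolding ue_def by blast
qed

definition cls :: "int \<Rightarrow> int \<times> int \<Rightarrow> (int \<times> int) set" where
  "cls k v = {w. admissible k w \<and> unit_equiv k v w}"

lemma cls_eq:
  assumes k: "k > 1" and "ue k v w"
  shows "cls k v = cls k w"
proof -
  have "ue k v x \<longleftrightarrow> ue k w x" for x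
    using assms(2) ue_sym ue_trans by blast
  moreover have "admissible k x \<Longrightarrow> unit_equiv k a x \<longleftrightarrow> ue k a x" for a x
    using ue_iff[OF k] by (simp add: admissible_def)
  ultimately show ?thesis unfolding cls_def by blast
qed

lemma cls_mem:
  assumes k: "k > 1" and "admissible k w" and "w \<in> cls k v"
  shows "ue k v w"
proof -
  have "unit_equiv k v w" using assms(3) by (simp add: cls_def)
  moreover have "fst w \<in> {0..<k}" "snd w \<in> {0..<k}" using assms(2) by (simp_all add: admissible_def)
  ultimately show ?thesis using ue_iff[OF k] by blast
qed

lemma cls_self:
  assumes k: "k > 1" and "admissible k w"
  shows "w \<in> cls k w"
proof -
  have "fst w \<in> {0..<k}" "snd w \<in> {0..<k}" using assms(2) by (simp_all add: admissible_def)
  then have "unit_equiv k w w" using ue_iff[OF k, of w w] ue_refl by blast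
  then show ?thesis using assms(2) by (simp add: cls_def)
qed

lemma phik_cls: "phik k u = cls k (fst u mod k, snd u mod k)"
  by (simp add: phik_def cls_def)

lemma ue_mod:
  assumes "k > 0"
  shows "ue k v (fst w mod k, snd w mod k) \<longleftrightarrow> ue k v w"
    and "ue k (fst v mod k, snd v mod k) w \<longleftrightarrow> ue k v w"
proof -
  have a: "k dvd a mod k - b \<longleftrightarrow> k dvd a - b" for a b :: int
    by (metis mod_eq_dvd_iff mod_mod_trivial)
  have b: "k dvd a - c * (b mod k) \<longleftrightarrow> k dvd a - c * b" for a b c :: int
    by (metis mod_eq_dvd_iff mod_mult_right_eq)
  show "ue k v (fst w mod k, snd w mod k) \<longleftrightarrow> ue k v w" by (simp add: ue_def a)
  show "ue k (fst v mod k, snd v mod k) w \<longleftrightarrow> ue k v w" by (simp add: ue_def b)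
qed

lemma ue_det:
  assumes u: "prim u" and w: "prim w"
  shows "ue k u w \<longleftrightarrow> k dvd det u w"
proof
  assume "ue k u w"
  then obtain c where c: "k dvd fst w - c * fst u" "k dvd snd w - c * snd u"
    by (auto simp: ue_def)
  have "det u w = fst u * (snd w - c * snd u) - snd u * (fst w - c * fst u)"
    by (simp add: det_def algebra_simps)
  then show "k dvd det u w" using c by simp
next
  assume d: "k dvd det u w"
  obtain s t where st: "s * fst u + t * snd u = 1"
    using bezout_int[of "fst u" "snd u"] u by (auto simp: prim_def)
  define c where "c = s * fst w + t * snd w"
  have 1: "fst w - c * fst u = - t * det u w"
    using st by (simp add: c_def det_def) algebra
  have 2: "snd w - c * snd u = s * det u w"
    using st by (simp add: c_def det_def) algebra
  obtain q where q: "det u w = k * q" using d by blast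
  have cc: "coprime c k"
  proof (rule coprimeI)
    fix g assume g: "g dvd c" "g dvd k"
    have "fst w = c * fst u + k * (- t * q)" using 1 q by (simp add: algebra_simps)
    then have "g dvd fst w" using g by (metis dvd_add dvd_mult2)
    moreover have "snd w = c * snd u + k * (s * q)" using 2 q by (simp add: algebra_simps)
    then have "g dvd snd w" using g by (metis dvd_add dvd_mult2)
    ultimately show "is_unit g" using w by (metis prim_def coprime_common_divisor)
  qed
  show "ue k u w" unfolding ue_def using cc 1 2 d
    by (intro exI[of _ c]) simp
qed

lemma adm_mod:
  assumes k: "k > 1" and u: "prim u"
  shows "admissible k (fst u mod k, snd u mod k)"
  unfolding admissible_def
proof (intro conjI ballI impI)
  show "fst (fst u mod k, snd u mod k) \<in> {0..<k}" "snd (fst u mod k, snd u mod k) \<in> {0..<k}"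
    using k by auto
  fix c assume c: "c \<in> {0..<k}"
    "c * fst (fst u mod k, snd u mod k) mod k = 0 \<and> c * snd (fst u mod k, snd u mod k) mod k = 0"
  have "(c * (fst u mod k)) mod k = (c * fst u) mod k" "(c * (snd u mod k)) mod k = (c * snd u) mod k"
    by (simp_all add: mod_mult_right_eq)
  then have "k dvd c * fst u" "k dvd c * snd u"
    using c(2) by (simp_all add: mod_eq_0_iff_dvd)
  obtain s t where st: "s * fst u + t * snd u = 1"
    using bezout_int[of "fst u" "snd u"] u by (auto simp: prim_def)
  have "c = s * (c * fst u) + t * (c * snd u)" using st by algebra
  then have "k dvd c" using \<open>k dvd c * fst u\<close> \<open>k dvd c * snd u\<close>
    by (metis dvd_add dvd_mult)
  then show "c = 0" using c(1) by (metis atLeastLessThan_iff linorder_not_le zdvd_imp_le order_le_less)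
qed



lemma adm_not_both:
  assumes pr: "prime P" and k: "k = P ^ l" and l: "l > 0" and adm: "admissible k v"
  shows "\<not> (P dvd fst v \<and> P dvd snd v)"
proof
  assume h: "P dvd fst v \<and> P dvd snd v"
  define lam where "lam = P ^ (l - 1)"
  have P1: "P > 1" using pr by (simp add: prime_gt_1_int)
  have lamk: "lam * P = k" using l k unfolding lam_def
    by (cases l) (simp_all add: mult.commute)
  have lpos: "lam > 0" using P1 by (simp add: lam_def)
  have "lam * 1 < lam * P" by (rule mult_strict_left_mono[OF P1 lpos])
  then have "lam < k" using lamk by simp
  then have lr: "lam \<in> {0..<k}" using lpos by simp
  obtain a' where a': "fst v = P * a'" using h by blast
  obtain b' where b': "snd v = P * b'" using h by blast
  have "lam * fst v = (lam * P) * a'" unfolding a' by (rule mult.assoc[symmetric])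
  then have e1: "lam * fst v = k * a'" by (simp only: lamk)
  have "lam * snd v = (lam * P) * b'" unfolding b' by (rule mult.assoc[symmetric])
  then have e2: "lam * snd v = k * b'" by (simp only: lamk)
  have M: "(lam * fst v) mod k = 0 \<and> (lam * snd v) mod k = 0" unfolding e1 e2 by simp
  have H: "\<forall>c\<in>{0..<k}. c * fst v mod k = 0 \<and> c * snd v mod k = 0 \<longrightarrow> c = 0"
    using adm unfolding admissible_def by (elim conjE)
  have "lam = 0" using bspec[OF H lr] M by blast
  then show False using lpos by simp
qed

lemma lift:
  assumes pr: "prime P" and k: "k = P ^ l" and l: "l > 0" and adm: "admissible k v"
  shows "\<exists>u\<in>Fverts. ue k v u"
proof -
  have P1: "P > 1" using pr by (simp add: prime_gt_1_int)
  have kpos: "k > 0" using P1 k by simp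
  have nb: "\<not> (P dvd fst v \<and> P dvd snd v)" by (rule adm_not_both[OF pr k l adm])
  show ?thesis
  proof (cases "P dvd snd v")
    case False
    then have "coprime (snd v) P" using pr by (simp add: prime_imp_coprime coprime_commute)
    then have "coprime (snd v) k" using k by simp
    then obtain c e where ce: "c * snd v + e * k = 1" using bezout_int[of "snd v" k] by auto
    have cc: "coprime c k"
    proof (rule coprimeI)
      fix g assume "g dvd c" "g dvd k"
      then have "g dvd c * snd v + e * k" by simp
      then show "is_unit g" using ce by simp
    qed
    have "k dvd 1 - c * snd v" using ce by (metis add_diff_cancel_left' dvd_triv_left mult.commute)
    then have "ue k v (c * fst v, 1)" using cc unfolding ue_def by (intro exI[of _ c]) simp
    moreover have "(c * fst v, 1) \<in> Fverts" by (simp add: Fverts_def)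
    ultimately show ?thesis by blast
  next
    case True
    then have "\<not> P dvd fst v" using nb by blast
    then have "coprime (fst v) P" using pr by (simp add: prime_imp_coprime coprime_commute)
    then have "coprime (fst v) k" using k by simp
    then obtain c e where ce: "c * fst v + e * k = 1" using bezout_int[of "fst v" k] by auto
    have cc: "coprime c k"
    proof (rule coprimeI)
      fix g assume "g dvd c" "g dvd k"
      then have "g dvd c * fst v + e * k" by simp
      then show "is_unit g" using ce by simp
    qed
    have "k dvd 1 - c * fst v" using ce by (metis add_diff_cancel_left' dvd_triv_left mult.commute)
    moreover have "k dvd (c * snd v) mod k - c * snd v" by (simp add: mod_eq_dvd_iff[symmetric])
    ultimately have "ue k v (1, (c * snd v) mod k)" using cc unfolding ue_def
      by (intro exI[of _ c]) simp
    moreover have "(1, (c * snd v) mod k) \<in> Fverts"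
    proof -
      have "(c * snd v) mod k \<ge> 0" using kpos by simp
      then show ?thesis by (auto simp: Fverts_def)
    qed
    ultimately show ?thesis by blast
  qed
qed

lemma phik_iff:
  assumes k: "k > 1" and u: "u \<in> Fverts" and w: "w \<in> Fverts"
  shows "phik k w = phik k u \<longleftrightarrow> k dvd det u w"
proof -
  have pu: "prim u" and pw: "prim w" using u w by (simp_all add: Fverts_prim)
  have k0: "k > 0" using k by simp
  let ?U = "(fst u mod k, snd u mod k)" and ?W = "(fst w mod k, snd w mod k)"
  have eq: "ue k ?U ?W \<longleftrightarrow> k dvd det u w"
    using ue_mod[OF k0, of ?U w] ue_mod[OF k0, of u w] ue_det[OF pu pw] by simp
  show ?thesis
  proof
    assume "phik k w = phik k u"
    moreover have "?W \<in> cls k ?W" by (rule cls_self[OF k adm_mod[OF k pw]])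
    ultimately have "?W \<in> cls k ?U" by (simp add: phik_cls)
    then have "ue k ?U ?W" by (rule cls_mem[OF k adm_mod[OF k pw]])
    then show "k dvd det u w" using eq by simp
  next
    assume "k dvd det u w"
    then have "ue k ?U ?W" using eq by simp
    then show "phik k w = phik k u" using cls_eq[OF k] by (simp add: phik_cls)
  qed
qed

theorem proposition4p2:
  fixes p l :: nat and k :: int and L :: "(int \<times> int) set"
  assumes "prime p" and "l > 0" and "k = int (p ^ l)"
    and "L \<in> Lk k"
  shows "induced_connected k {u \<in> Fverts. phik k u = L}"
proof -
  define P where "P = int p"
  have pr: "prime P" using assms(1) by (simp add: P_def)
  have kP: "k = P ^ l" using assms(3) by (simp add: P_def)
  have P1: "P > 1" using pr by (simp add: prime_gt_1_int)
  have "P \<le> P ^ l" using P1 assms(2) by (simp add: self_le_power)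
  then have k: "k > 1" using P1 kP by linarith
  obtain v0 where v0: "admissible k v0" "L = cls k v0"
    using assms(4) by (auto simp: Lk_def cls_def)
  obtain u0 where u0: "u0 \<in> Fverts" "ue k v0 u0" using lift[OF pr kP assms(2) v0(1)] by blast
  have "ue k v0 (fst u0 mod k, snd u0 mod k)" using u0(2) ue_mod(1)[of k v0 u0] k by simp
  then have "cls k v0 = phik k u0" using cls_eq[OF k] by (simp add: phik_cls)
  then have u0L: "phik k u0 = L" using v0 by simp
  define T where "T = {u \<in> Fverts. phik k u = L}"
  have Teq: "T = {w\<in>Fverts. k dvd det u w}" if "u \<in> T" for u
  proof -
    have uF: "u \<in> Fverts" and uL: "phik k u = L" using that by (auto simp: T_def)
    show ?thesis unfolding T_def using phik_iff[OF k uF] uL by blast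
  qed
  have "(\<lambda>x y. x \<in> T \<and> y \<in> T \<and> Fk_edge k x y)\<^sup>*\<^sup>* u v" if "u \<in> T" "v \<in> T" for u v
  proof -
    have uF: "u \<in> Fverts" and vF: "v \<in> Fverts" using that by (auto simp: T_def)
    have "k dvd det u v" using that Teq[OF that(1)] by auto
    then obtain q where q: "det u v = k * q" by blast
    have "\<bar>det u v\<bar> = int (nat \<bar>q\<bar>) * k" using q k by (simp add: abs_mult)
    from descent[OF pr kP assms(2) uF Fverts_prim[OF vF] this]
    show ?thesis unfolding Teq[OF that(1)] Fverts_nrm[OF vF] .
  qed
  moreover have "T \<noteq> {}" unfolding T_def using u0(1) u0L by blast
  ultimately show ?thesis unfolding induced_connected_def T_def by blast
qed

end
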